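(* Let $1/n\ll \beta \ll\xi, \mu$. Let $K_{2n+1}$ be 2-factorized. Suppose that $V_0\subseteq V(K_{2n+1})$ and $D_0\subseteq C(K_{2n+1})$ are $\mu$-random subsets which are independent of each other. Then, with high probability, the following holds. Let $C,\bar{C}\subseteq C(K_{2n+1})$ and $X,\bar{V},Z\subseteq V(K_{2n+1})$ satisfy $|\bar{C}|,|\bar{V}|\leq \beta n$ and $|C|\leq 100$, and suppose that $X,Z$ are disjoint and $(X,Z)$ is $(\xi n)$-replete. Then there are sets $X'\subseteq X\setminus \bar{V}$, $C'\subseteq D_0\setminus \bar{C}$ and $V'\subseteq (V_0\cup Z)\setminus \bar{V}$ with $|X'|=|C|$, $|C'|=|C|-1$ and $|V'|\leq 3|C|$ such that, for every $c\in C$, there is a perfect $(C'\cup \{c\})$-rainbow matching from $X'$ to $V'$.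
   Context: A 2-factorization of $K_{2n+1}$ is an edge-colouring in which every vertex is incident to exactly 2 edges of each colour; $C(K_{2n+1})$ is its colour set. A $q$-random subset contains each element independently with probability $q$. For disjoint $W,Y$, $(W,Y)$ is $\ell$-replete if for every colour at least $\ell$ edges of that colour join $W$ to $Y$. A perfect $D$-rainbow matching from $X'$ to $V'$ is a matching covering every vertex of $X'$, each edge joining $X'$ to $V'$, with distinct colours all in $D$. "With high probability": probability $1-o(1)$ as $n\to\infty$. $a\ll b,c$ means the statement holds whenever $a\le \min(b,c)^K/K$ for a suitable fixed absolute constant $K$; $1/n\ll\cdots$ entails $n$ large. *)

theory Defs
  imports "HOL-Probability.Probability"
begin

definition verts :: "nat \<Rightarrow> nat set" where
  "verts n = {..<2*n+1}"

definition Kedges :: "nat \<Rightarrow> nat set set" where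
  "Kedges n = {e. \<exists>u v. u \<noteq> v \<and> u \<in> verts n \<and> v \<in> verts n \<and> e = {u, v}}"

definition colours :: "nat \<Rightarrow> (nat set \<Rightarrow> 'c) \<Rightarrow> 'c set" where
  "colours n col = col ` Kedges n"

definition two_factorization :: "nat \<Rightarrow> (nat set \<Rightarrow> 'c) \<Rightarrow> bool" where
  "two_factorization n col \<longleftrightarrow>
     (\<forall>v\<in>verts n. \<forall>c\<in>colours n col. card {e \<in> Kedges n. v \<in> e \<and> col e = c} = 2)"

definition random_subset :: "real \<Rightarrow> 'a set \<Rightarrow> 'a set pmf" where
  "random_subset q A = map_pmf (\<lambda>f. {x\<in>A. f x}) (Pi_pmf A False (\<lambda>_. bernoulli_pmf q))"

definition replete :: "nat \<Rightarrow> (nat set \<Rightarrow> 'c) \<Rightarrow> real \<Rightarrow> nat set \<Rightarrow> nat set \<Rightarrow> bool" where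
  "replete n col l W Y \<longleftrightarrow> W \<inter> Y = {} \<and>
     (\<forall>c\<in>colours n col.
        real (card {e \<in> Kedges n. col e = c \<and> (\<exists>w\<in>W. \<exists>y\<in>Y. e = {w, y})}) \<ge> l)"

definition perfect_rainbow_matching ::
  "nat \<Rightarrow> (nat set \<Rightarrow> 'c) \<Rightarrow> 'c set \<Rightarrow> nat set \<Rightarrow> nat set \<Rightarrow> nat set set \<Rightarrow> bool" where
  "perfect_rainbow_matching n col D X' V' M \<longleftrightarrow>
     M \<subseteq> Kedges n \<and>
     (\<forall>e\<in>M. \<forall>e'\<in>M. e \<noteq> e' \<longrightarrow> e \<inter> e' = {}) \<and>
     (\<forall>x\<in>X'. \<exists>e\<in>M. x \<in> e) \<and>
     (\<forall>e\<in>M. \<exists>x\<in>X'. \<exists>v\<in>V' - X'. e = {x, v}) \<and>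
     inj_on col M \<and> col ` M \<subseteq> D"

definition lemma4p1_property ::
  "nat \<Rightarrow> (nat set \<Rightarrow> 'c) \<Rightarrow> real \<Rightarrow> real \<Rightarrow> nat set \<Rightarrow> 'c set \<Rightarrow> bool" where
  "lemma4p1_property n col \<beta> \<xi> V0 D0 \<longleftrightarrow>
     (\<forall>C Cbar X Vbar Z.
        C \<subseteq> colours n col \<longrightarrow> Cbar \<subseteq> colours n col \<longrightarrow>
        X \<subseteq> verts n \<longrightarrow> Vbar \<subseteq> verts n \<longrightarrow> Z \<subseteq> verts n \<longrightarrow>
        real (card Cbar) \<le> \<beta> * n \<longrightarrow> real (card Vbar) \<le> \<beta> * n \<longrightarrow> card C \<le> 100 \<longrightarrow>
        X \<inter> Z = {} \<longrightarrow> replete n col (\<xi> * n) X Z \<longrightarrow>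
        (\<exists>X' C' V'. X' \<subseteq> X - Vbar \<and> C' \<subseteq> D0 - Cbar \<and> V' \<subseteq> (V0 \<union> Z) - Vbar \<and>
           card X' = card C \<and> card C' = card C - 1 \<and> card V' \<le> 3 * card C \<and>
           (\<forall>c\<in>C. \<exists>M. perfect_rainbow_matching n col (C' \<union> {c}) X' V' M)))"

end

theory Submission
  imports Defs "HOL-Real_Asymp.Real_Asymp"
begin


lemma prob_three:
  fixes I :: "'i set"
  assumes fin: "finite I" and mu: "0 \<le> \<mu>" "\<mu> \<le> 1"
    and K: "p \<in> I" "q \<in> I" "r \<in> I" "p \<noteq> q" "p \<noteq> r" "q \<noteq> r"
  shows "measure_pmf.prob (Pi_pmf I False (\<lambda>_. bernoulli_pmf \<mu>)) {h. h p \<and> h q \<and> h r} = \<mu>^3"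
proof -
  define B where "B = (\<lambda>i. if i \<in> {p,q,r} then {True} else (UNIV::bool set))"
  have "{h. h p \<and> h q \<and> h r} = Pi I B"
    using K by (auto simp: B_def Pi_def)
  hence "measure_pmf.prob (Pi_pmf I False (\<lambda>_. bernoulli_pmf \<mu>)) {h. h p \<and> h q \<and> h r}
     = (\<Prod>i\<in>I. measure_pmf.prob (bernoulli_pmf \<mu>) (B i))"
    using fin by (simp add: measure_Pi_pmf_Pi)
  also have "\<dots> = (\<Prod>i\<in>I. if i \<in> {p,q,r} then \<mu> else 1)"
    using mu by (intro prod.cong refl) (auto simp: B_def measure_pmf_single)
  also have "\<dots> = (\<Prod>i\<in>I \<inter> {p,q,r}. \<mu>)"
  proof -
    have e: "{x. x = p \<or> x = q \<or> x = r} = {p,q,r}" by auto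
    show ?thesis using fin by (subst prod.If_cases) (simp_all add: e)
  qed
  also have "I \<inter> {p,q,r} = {p,q,r}" using K by auto
  also have "(\<Prod>i\<in>{p,q,r}. \<mu>) = \<mu>^3" using K by (simp add: power3_eq_cube)
  finally show ?thesis .
qed

lemma hoeff_blocks:
  fixes I :: "'i set" and T :: "'t set" and p q r :: "'t \<Rightarrow> 'i"
  assumes fin: "finite I" "finite T" "T \<noteq> {}" and mu: "0 \<le> \<mu>" "\<mu> \<le> 1"
    and inI: "\<And>d. d \<in> T \<Longrightarrow> p d \<in> I \<and> q d \<in> I \<and> r d \<in> I"
    and dist: "\<And>d. d \<in> T \<Longrightarrow> p d \<noteq> q d \<and> p d \<noteq> r d \<and> q d \<noteq> r d"
    and disj: "disjoint_family_on (\<lambda>d. {p d, q d, r d}) T"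
    and eps: "eps \<ge> 0"
  shows "measure_pmf.prob (Pi_pmf I False (\<lambda>_. bernoulli_pmf \<mu>))
     {h. (\<Sum>d\<in>T. if h (p d) \<and> h (q d) \<and> h (r d) then 1 else 0::real) \<le> real (card T) * \<mu>^3 - eps}
     \<le> exp (-2 * eps^2 / card T)"
proof -
  let ?P = "Pi_pmf I False (\<lambda>_. bernoulli_pmf \<mu>)"
  let ?M = "measure_pmf ?P"
  define Y where "Y = (\<lambda>d h. if h (p d) \<and> h (q d) \<and> h (r d) then 1 else 0::real)"
  define K where "K = (\<lambda>d. {p d, q d, r d})"
  have ind0: "prob_space.indep_vars ?M (\<lambda>_. count_space UNIV) (\<lambda>x f. f x) I"
    by (rule indep_vars_Pi_pmf[OF fin(1)])
  have ind1: "prob_space.indep_vars ?M (\<lambda>j. PiM (K j) (\<lambda>_. count_space UNIV))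
      (\<lambda>j \<omega>. restrict (\<lambda>i. \<omega> i) (K j)) T"
    using prob_space.indep_vars_restrict[OF measure_pmf.prob_space_axioms ind0, of T K] inI disj
    unfolding K_def by auto
  have ind2: "prob_space.indep_vars ?M (\<lambda>_. borel)
      (\<lambda>j \<omega>. (\<lambda>s. if s (p j) \<and> s (q j) \<and> s (r j) then 1 else 0::real) (restrict (\<lambda>i. \<omega> i) (K j))) T"
    by (rule prob_space.indep_vars_compose2[OF measure_pmf.prob_space_axioms ind1]) (auto simp: K_def)
  have ind3: "prob_space.indep_vars ?M (\<lambda>_. borel) Y T"
    using ind2 by (rule prob_space.indep_vars_cong[OF measure_pmf.prob_space_axioms, THEN iffD1, rotated 3]) (auto simp: Y_def K_def)
  have EY: "measure_pmf.expectation ?P (Y d) = \<mu>^3" if d: "d \<in> T" for d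
  proof -
    have "Y d = indicator {h. h (p d) \<and> h (q d) \<and> h (r d)}"
      by (auto simp: Y_def indicator_def)
    hence "measure_pmf.expectation ?P (Y d) = measure_pmf.prob ?P {h. h (p d) \<and> h (q d) \<and> h (r d)}"
      by simp
    also have "\<dots> = \<mu>^3"
      using inI[OF d] dist[OF d] by (intro prob_three fin mu) auto
    finally show ?thesis .
  qed
  interpret H: Hoeffding_ineq ?M T Y "\<lambda>_. 0" "\<lambda>_. 1" "\<Sum>d\<in>T. measure_pmf.expectation ?P (Y d)"
  proof unfold_locales
    show "finite T" by (rule fin)
    show "prob_space.indep_vars ?M (\<lambda>_. borel) Y T" by (rule ind3)
    fix i assume "i \<in> T"
    show "AE x in ?M. Y i x \<in> {0..1}" by (simp add: Y_def)
  qed simp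
  have "measure_pmf.prob ?P {x \<in> space ?M. (\<Sum>i\<in>T. Y i x) \<le> (\<Sum>d\<in>T. measure_pmf.expectation ?P (Y d)) - eps}
     \<le> exp (- 2 * eps\<^sup>2 / (\<Sum>i\<in>T. (1 - 0)\<^sup>2))"
    using fin by (intro H.Hoeffding_ineq_le eps) auto
  moreover have "(\<Sum>d\<in>T. measure_pmf.expectation ?P (Y d)) = real (card T) * \<mu>^3"
    using EY by simp
  ultimately show ?thesis by (simp add: Y_def)
qed



lemma Pi_pmf_Inl:
  assumes "finite A"
  shows "Pi_pmf A False (\<lambda>_. bernoulli_pmf \<mu>) =
    map_pmf (\<lambda>g. g \<circ> Inl) (Pi_pmf (Inl ` A :: ('a + 'b) set) False (\<lambda>_. bernoulli_pmf \<mu>))"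
proof -
  have b: "bij_betw Inl A (Inl ` A :: ('a + 'b) set)" by (simp add: bij_betw_imageI)
  have c: "\<And>x. x \<notin> A \<Longrightarrow> (Inl x :: ('a + 'b)) \<notin> Inl ` A" by auto
  show ?thesis by (rule Pi_pmf_bij_betw[OF assms b c])
qed

lemma Pi_pmf_Inr:
  assumes "finite A"
  shows "Pi_pmf A False (\<lambda>_. bernoulli_pmf \<mu>) =
    map_pmf (\<lambda>g. g \<circ> Inr) (Pi_pmf (Inr ` A :: ('b + 'a) set) False (\<lambda>_. bernoulli_pmf \<mu>))"
proof -
  have b: "bij_betw Inr A (Inr ` A :: ('b + 'a) set)" by (simp add: bij_betw_imageI)
  have c: "\<And>x. x \<notin> A \<Longrightarrow> (Inr x :: ('b + 'a)) \<notin> Inr ` A" by auto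
  show ?thesis by (rule Pi_pmf_bij_betw[OF assms b c])
qed

lemma pair_random_subset:
  fixes A :: "'a set" and B :: "'b set"
  assumes "finite A" "finite B"
  shows "pair_pmf (random_subset \<mu> A) (random_subset \<mu> B) =
    map_pmf (\<lambda>h. ({v\<in>A. h (Inl v)}, {d\<in>B. h (Inr d)}))
      (Pi_pmf (Inl ` A \<union> Inr ` B) False (\<lambda>_. bernoulli_pmf \<mu>))"
proof -
  have U: "Pi_pmf (Inl ` A \<union> Inr ` B) False (\<lambda>_. bernoulli_pmf \<mu>) =
     map_pmf (\<lambda>(f,g) x. if x \<in> Inl ` A then f x else g x)
       (pair_pmf (Pi_pmf (Inl ` A) False (\<lambda>_. bernoulli_pmf \<mu>)) (Pi_pmf (Inr ` B) False (\<lambda>_. bernoulli_pmf \<mu>)))"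
    using assms by (intro Pi_pmf_union) auto
  let ?PA = "Pi_pmf (Inl ` A) False (\<lambda>_. bernoulli_pmf \<mu>) :: ('a + 'b \<Rightarrow> bool) pmf"
  let ?PB = "Pi_pmf (Inr ` B) False (\<lambda>_. bernoulli_pmf \<mu>) :: ('a + 'b \<Rightarrow> bool) pmf"
  have "pair_pmf (random_subset \<mu> A) (random_subset \<mu> B) =
     pair_pmf (map_pmf (\<lambda>g. {v\<in>A. g (Inl v)}) ?PA) (map_pmf (\<lambda>g. {d\<in>B. g (Inr d)}) ?PB)"
    unfolding random_subset_def
    by (subst Pi_pmf_Inl[OF assms(1)], subst Pi_pmf_Inr[OF assms(2)]) (simp add: pmf.map_comp o_def)
  also have "\<dots> = map_pmf (\<lambda>(f,g). ({v\<in>A. f (Inl v)}, {d\<in>B. g (Inr d)})) (pair_pmf ?PA ?PB)"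
    by (simp add: map_pair)
  also have "\<dots> = map_pmf (\<lambda>h. ({v\<in>A. h (Inl v)}, {d\<in>B. h (Inr d)}))
      (map_pmf (\<lambda>(f,g) x. if x \<in> Inl ` A then f x else g x) (pair_pmf ?PA ?PB))"
  proof -
    have eq: "(\<lambda>(f,g). ({v\<in>A. f (Inl v)}, {d\<in>B. g (Inr d)})) =
       (\<lambda>h. ({v\<in>A. h (Inl v)}, {d\<in>B. h (Inr d)})) \<circ> (\<lambda>(f,g) x. if x \<in> Inl ` A then f x else g x)"
    proof (rule ext, clarify)
      fix f g :: "'a + 'b \<Rightarrow> bool"
      have e1: "{v\<in>A. (if Inl v \<in> Inl ` A then f (Inl v) else g (Inl v))} = {v\<in>A. f (Inl v)}" by auto
      have e2: "{d\<in>B. (if (Inr d :: 'a + 'b) \<in> Inl ` A then f (Inr d) else g (Inr d))} = {d\<in>B. g (Inr d)}" by auto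
      show "({v\<in>A. f (Inl v)}, {d\<in>B. g (Inr d)}) =
         ((\<lambda>h. ({v\<in>A. h (Inl v)}, {d\<in>B. h (Inr d)})) \<circ> (\<lambda>(f,g) x. if x \<in> Inl ` A then f x else g x)) (f,g)"
        by (simp only: comp_def case_prod_conv e1 e2)
    qed
    show ?thesis by (simp only: eq pmf.map_comp)
  qed
  finally show ?thesis using U by simp
qed



lemma indep_set:
  fixes S :: "'a set" and R :: "'a \<Rightarrow> 'a \<Rightarrow> bool"
  assumes "finite S" "\<And>d. d \<in> S \<Longrightarrow> \<not> R d d"
    "\<And>d. d \<in> S \<Longrightarrow> card {d'\<in>S. R d d' \<or> R d' d} \<le> 2"
  shows "\<exists>T\<subseteq>S. card S \<le> 3 * card T \<and> (\<forall>d\<in>T. \<forall>d'\<in>T. \<not> R d d')"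
  using assms
proof (induction "card S" arbitrary: S rule: less_induct)
  case less
  show ?case
  proof (cases "S = {}")
    case True thus ?thesis by auto
  next
    case False
    then obtain v where v: "v \<in> S" by auto
    define N where "N = {d'\<in>S. R v d' \<or> R d' v}"
    define S' where "S' = S - insert v N"
    have fS': "finite S'" using less.prems(1) by (simp add: S'_def)
    have cN: "card N \<le> 2" using less.prems(3)[OF v] by (simp add: N_def)
    have "card S \<le> card S' + card (insert v N)"
    proof -
      have "S \<subseteq> S' \<union> insert v N" by (auto simp: S'_def)
      hence "card S \<le> card (S' \<union> insert v N)"
        using less.prems(1) by (intro card_mono) (auto simp: S'_def N_def)
      also have "\<dots> \<le> card S' + card (insert v N)" by (rule card_Un_le)
      finally show ?thesis .
    qed
    moreover have "card (insert v N) \<le> 3"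
    proof -
      have "card (insert v N) \<le> Suc (card N)" by (rule card_insert_le_m1) simp_all
      thus ?thesis using cN by simp
    qed
    ultimately have c1: "card S \<le> card S' + 3" by linarith
    have lt: "card S' < card S"
      using v less.prems(1) by (intro psubset_card_mono) (auto simp: S'_def)
    have p2: "\<And>d. d \<in> S' \<Longrightarrow> \<not> R d d" using less.prems(2) by (auto simp: S'_def)
    have p3: "card {d'\<in>S'. R d d' \<or> R d' d} \<le> 2" if d: "d \<in> S'" for d
    proof -
      have "card {d'\<in>S'. R d d' \<or> R d' d} \<le> card {d'\<in>S. R d d' \<or> R d' d}"
        using less.prems(1) by (intro card_mono) (auto simp: S'_def)
      also have "\<dots> \<le> 2" using less.prems(3) d by (auto simp: S'_def)
      finally show ?thesis .
    qed
    obtain T' where T': "T' \<subseteq> S'" "card S' \<le> 3 * card T'" "\<forall>d\<in>T'. \<forall>d'\<in>T'. \<not> R d d'"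
      using less.hyps[OF lt fS' p2 p3] by blast
    have vT': "v \<notin> T'" using T'(1) by (auto simp: S'_def)
    have fT': "finite T'" using T'(1) fS' finite_subset by blast
    show ?thesis
    proof (intro exI[of _ "insert v T'"] conjI)
      show "insert v T' \<subseteq> S" using T'(1) v by (auto simp: S'_def)
      show "card S \<le> 3 * card (insert v T')" using c1 T'(2) vT' fT' by simp
      show "\<forall>d\<in>insert v T'. \<forall>d'\<in>insert v T'. \<not> R d d'"
        using T' less.prems(2)[OF v] by (auto simp: S'_def N_def)
    qed
  qed
qed



definition nbr :: "nat \<Rightarrow> (nat set \<Rightarrow> 'c) \<Rightarrow> nat \<Rightarrow> 'c \<Rightarrow> nat set" where
  "nbr n col v d = {w. {v,w} \<in> Kedges n \<and> col {v,w} = d}"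

lemma finite_verts[simp]: "finite (verts n)" by (simp add: verts_def)

lemma Kedges_sub: "Kedges n \<subseteq> Pow (verts n)" by (auto simp: Kedges_def)

lemma finite_Kedges[simp]: "finite (Kedges n)"
  by (rule finite_subset[OF Kedges_sub]) simp

lemma finite_colours[simp]: "finite (colours n col)" by (simp add: colours_def)

lemma Kedges_iff: "{v,w} \<in> Kedges n \<longleftrightarrow> v \<noteq> w \<and> v \<in> verts n \<and> w \<in> verts n"
  by (auto simp: Kedges_def doubleton_eq_iff)

lemma nbr_sub: "nbr n col v d \<subseteq> verts n" by (auto simp: nbr_def Kedges_iff)

lemma finite_nbr[simp]: "finite (nbr n col v d)" by (rule finite_subset[OF nbr_sub]) simp

lemma card_nbr:
  assumes tf: "two_factorization n col" and v: "v \<in> verts n" and d: "d \<in> colours n col"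
  shows "card (nbr n col v d) = 2"
proof -
  have "{e \<in> Kedges n. v \<in> e \<and> col e = d} = (\<lambda>w. {v,w}) ` nbr n col v d"
  proof
    show "(\<lambda>w. {v,w}) ` nbr n col v d \<subseteq> {e \<in> Kedges n. v \<in> e \<and> col e = d}"
      by (auto simp: nbr_def)
    show "{e \<in> Kedges n. v \<in> e \<and> col e = d} \<subseteq> (\<lambda>w. {v,w}) ` nbr n col v d"
    proof
    fix e assume "e \<in> {e \<in> Kedges n. v \<in> e \<and> col e = d}"
    hence e: "e \<in> Kedges n" "v \<in> e" "col e = d" by auto
    then obtain u w where "u \<noteq> w" "e = {u,w}" by (auto simp: Kedges_def)
    with e obtain w' where "e = {v,w'}" by auto
    with e show "e \<in> (\<lambda>w. {v,w}) ` nbr n col v d" by (auto simp: nbr_def)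
    qed
  qed
  moreover have "inj_on (\<lambda>w. {v,w}) (nbr n col v d)"
    by (auto simp: inj_on_def nbr_def Kedges_iff doubleton_eq_iff)
  ultimately have "card {e \<in> Kedges n. v \<in> e \<and> col e = d} = card (nbr n col v d)"
    by (simp add: card_image)
  with tf v d show ?thesis unfolding two_factorization_def by auto
qed

lemma card_colours_ge:
  assumes tf: "two_factorization n col"
  shows "n \<le> card (colours n col)"
proof -
  have z: "0 \<in> verts n" by (simp add: verts_def)
  have "verts n - {0} \<subseteq> (\<Union>d\<in>colours n col. nbr n col 0 d)"
  proof
    fix w assume w: "w \<in> verts n - {0}"
    hence "{0,w} \<in> Kedges n" using z by (auto simp: Kedges_iff)
    thus "w \<in> (\<Union>d\<in>colours n col. nbr n col 0 d)"
      by (auto simp: nbr_def colours_def)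
  qed
  hence "card (verts n - {0}) \<le> card (\<Union>d\<in>colours n col. nbr n col 0 d)"
    by (intro card_mono) auto
  also have "\<dots> \<le> (\<Sum>d\<in>colours n col. card (nbr n col 0 d))" by (rule card_UN_le) simp
  also have "\<dots> = (\<Sum>d\<in>colours n col. 2)"
    using card_nbr[OF tf z] by (intro sum.cong) auto
  finally show ?thesis using z by (simp add: verts_def)
qed

lemma pair_structure:
  assumes tf: "two_factorization n col" and x: "x \<in> verts n" and x': "x' \<in> verts n"
  shows "\<exists>T a b. T \<subseteq> colours n col \<and> card (colours n col) \<le> 3 * card T \<and>
     (\<forall>d\<in>T. {x, a d} \<in> Kedges n \<and> col {x, a d} = d \<and> {x', b d} \<in> Kedges n \<and> col {x', b d} = d
        \<and> a d \<noteq> b d) \<and> inj_on a T \<and> inj_on b T \<and> a ` T \<inter> b ` T = {}"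
proof -
  let ?S = "colours n col"
  have "\<forall>d\<in>?S. \<exists>ab. fst ab \<in> nbr n col x d \<and> snd ab \<in> nbr n col x' d \<and> fst ab \<noteq> snd ab"
  proof
    fix d assume d: "d \<in> ?S"
    have c1: "card (nbr n col x d) = 2" and c2: "card (nbr n col x' d) = 2"
      using card_nbr[OF tf x d] card_nbr[OF tf x' d] by auto
    have "nbr n col x d \<noteq> {}" using c1 by auto
    then obtain a where a: "a \<in> nbr n col x d" by auto
    have "nbr n col x' d - {a} \<noteq> {}"
    proof
      assume "nbr n col x' d - {a} = {}"
      hence "nbr n col x' d \<subseteq> {a}" by auto
      hence "card (nbr n col x' d) \<le> card {a}" by (intro card_mono) auto
      hence "card (nbr n col x' d) \<le> 1" by simp
      with c2 show False by simp
    qed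
    then obtain b where "b \<in> nbr n col x' d" "b \<noteq> a" by auto
    with a show "\<exists>ab. fst ab \<in> nbr n col x d \<and> snd ab \<in> nbr n col x' d \<and> fst ab \<noteq> snd ab"
      by (intro exI[of _ "(a,b)"]) auto
  qed
  then obtain f where f: "\<forall>d\<in>?S. fst (f d) \<in> nbr n col x d \<and> snd (f d) \<in> nbr n col x' d \<and> fst (f d) \<noteq> snd (f d)"
    by metis
  define a where "a = (\<lambda>d. fst (f d))"
  define b where "b = (\<lambda>d. snd (f d))"
  have ab: "\<forall>d\<in>?S. {x, a d} \<in> Kedges n \<and> col {x, a d} = d \<and> {x', b d} \<in> Kedges n \<and> col {x', b d} = d
        \<and> a d \<noteq> b d" using f by (auto simp: a_def b_def nbr_def)
  have ia: "inj_on a ?S"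
  proof (rule inj_onI)
    fix d d' assume "d \<in> ?S" "d' \<in> ?S" "a d = a d'"
    thus "d = d'" using ab by metis
  qed
  have ib: "inj_on b ?S"
  proof (rule inj_onI)
    fix d d' assume "d \<in> ?S" "d' \<in> ?S" "b d = b d'"
    thus "d = d'" using ab by metis
  qed
  define R where "R = (\<lambda>d d'. a d = b d')"
  have "card {d'\<in>?S. R d d' \<or> R d' d} \<le> 2" if d: "d \<in> ?S" for d
  proof -
    have "card {d'\<in>?S. b d' = a d} \<le> Suc 0"
      using ib by (subst card_le_Suc0_iff_eq) (auto simp: inj_on_def)
    moreover have "card {d'\<in>?S. a d' = b d} \<le> Suc 0"
      using ia by (subst card_le_Suc0_iff_eq) (auto simp: inj_on_def)
    moreover have "{d'\<in>?S. R d d' \<or> R d' d} = {d'\<in>?S. b d' = a d} \<union> {d'\<in>?S. a d' = b d}"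
      by (auto simp: R_def)
    ultimately show ?thesis using card_Un_le[of "{d'\<in>?S. b d' = a d}" "{d'\<in>?S. a d' = b d}"] by simp
  qed
  then obtain T where T: "T \<subseteq> ?S" "card ?S \<le> 3 * card T" "\<forall>d\<in>T. \<forall>d'\<in>T. \<not> R d d'"
    using indep_set[of ?S R] ab by (auto simp: R_def)
  show ?thesis
    apply (rule exI[of _ T], rule exI[of _ a], rule exI[of _ b])
    using T ab inj_on_subset[OF ia T(1)] inj_on_subset[OF ib T(1)] by (auto simp: R_def)
qed



definition gc :: "nat \<Rightarrow> (nat set \<Rightarrow> 'c) \<Rightarrow> nat set \<Rightarrow> 'c set \<Rightarrow> nat \<Rightarrow> nat \<Rightarrow> 'c set" where
  "gc n col V0 D0 x x' = {d\<in>D0. \<exists>a\<in>V0. \<exists>b\<in>V0. a \<noteq> b \<and> {x,a} \<in> Kedges n \<and> {x',b} \<in> Kedges n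
      \<and> col {x,a} = d \<and> col {x',b} = d}"

lemma sum_if_card: "finite T \<Longrightarrow> (\<Sum>d\<in>T. if P d then 1 else 0::real) = real (card {d\<in>T. P d})"
proof (induction T rule: finite_induct)
  case (insert x F)
  have "{d \<in> insert x F. P d} = (if P x then insert x {d\<in>F. P d} else {d\<in>F. P d})" by auto
  with insert show ?case by auto
qed simp

lemma pair_bound:
  fixes col :: "nat set \<Rightarrow> 'c"
  assumes tf: "two_factorization n col" and x: "x \<in> verts n" and x': "x' \<in> verts n"
    and n: "n \<ge> 1" and mu: "0 \<le> \<mu>" "\<mu> \<le> 1"
  shows "measure_pmf.prob (pair_pmf (random_subset \<mu> (verts n)) (random_subset \<mu> (colours n col)))
     {(V0, D0). real (card (gc n col V0 D0 x x')) < \<mu>^3 * n / 6} \<le> exp (- (\<mu>^6 * n / 6))"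
proof -
  obtain T a b where T: "T \<subseteq> colours n col" "card (colours n col) \<le> 3 * card T"
    and ab: "\<forall>d\<in>T. {x, a d} \<in> Kedges n \<and> col {x, a d} = d \<and> {x', b d} \<in> Kedges n \<and> col {x', b d} = d
        \<and> a d \<noteq> b d" and ia: "inj_on a T" and ib: "inj_on b T" and dab: "a ` T \<inter> b ` T = {}"
    using pair_structure[OF tf x x'] by blast
  have fT: "finite T" by (rule finite_subset[OF T(1) finite_colours])
  have cT: "real n \<le> 3 * real (card T)" using card_colours_ge[OF tf] T(2) by linarith
  hence Tne: "T \<noteq> {}" using n by auto
  define I where "I = Inl ` verts n \<union> Inr ` colours n col"
  let ?Q = "Pi_pmf I False (\<lambda>_. bernoulli_pmf \<mu>)"
  define F where "F = (\<lambda>h::nat + 'c \<Rightarrow> bool. ({v\<in>verts n. h (Inl v)}, {d\<in>colours n col. h (Inr d)}))"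
  define E where "E = {(V0, D0). real (card (gc n col V0 D0 x x')) < \<mu>^3 * n / 6}"
  define eps where "eps = real (card T) * \<mu>^3 / 2"
  have P: "pair_pmf (random_subset \<mu> (verts n)) (random_subset \<mu> (colours n col)) = map_pmf F ?Q"
    unfolding F_def I_def by (rule pair_random_subset) auto
  have sub: "F -` E \<subseteq> {h. (\<Sum>d\<in>T. if h (Inr d) \<and> h ((Inl \<circ> a) d) \<and> h ((Inl \<circ> b) d) then 1 else 0::real)
       \<le> real (card T) * \<mu>^3 - eps}"
  proof
    fix h assume h: "h \<in> F -` E"
    let ?G = "{d\<in>T. h (Inr d) \<and> h ((Inl \<circ> a) d) \<and> h ((Inl \<circ> b) d)}"
    have "?G \<subseteq> gc n col {v\<in>verts n. h (Inl v)} {d\<in>colours n col. h (Inr d)} x x'"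
    proof
      fix d assume d: "d \<in> ?G"
      hence dT: "d \<in> T" by auto
      have "a d \<in> verts n" "b d \<in> verts n" using ab dT by (auto simp: Kedges_iff)
      thus "d \<in> gc n col {v\<in>verts n. h (Inl v)} {d\<in>colours n col. h (Inr d)} x x'"
        using d ab T(1) unfolding gc_def by auto
    qed
    hence "card ?G \<le> card (gc n col {v\<in>verts n. h (Inl v)} {d\<in>colours n col. h (Inr d)} x x')"
      by (intro card_mono) (auto simp: gc_def)
    moreover have "real (card (gc n col {v\<in>verts n. h (Inl v)} {d\<in>colours n col. h (Inr d)} x x')) < \<mu>^3 * n / 6"
      using h by (simp add: F_def E_def)
    moreover have "\<mu>^3 * n / 6 \<le> real (card T) * \<mu>^3 - eps"
    proof -
      have "\<mu>^3 * n \<le> \<mu>^3 * (3 * real (card T))" by (rule mult_left_mono[OF cT]) (simp add: mu)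
      thus ?thesis by (simp add: eps_def algebra_simps)
    qed
    ultimately show "h \<in> {h. (\<Sum>d\<in>T. if h (Inr d) \<and> h ((Inl \<circ> a) d) \<and> h ((Inl \<circ> b) d) then 1 else 0::real)
       \<le> real (card T) * \<mu>^3 - eps}"
      using sum_if_card[OF fT] by simp
  qed
  have "measure_pmf.prob (map_pmf F ?Q) E = measure_pmf.prob ?Q (F -` E)" by simp
  also have "\<dots> \<le> measure_pmf.prob ?Q {h. (\<Sum>d\<in>T. if h (Inr d) \<and> h ((Inl \<circ> a) d) \<and> h ((Inl \<circ> b) d) then 1 else 0::real)
       \<le> real (card T) * \<mu>^3 - eps}"
    by (rule measure_pmf.finite_measure_mono[OF sub]) simp
  also have "\<dots> \<le> exp (-2 * eps^2 / card T)"
  proof (rule hoeff_blocks)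
    show "finite I" by (simp add: I_def)
    show "finite T" by (rule fT)
    show "T \<noteq> {}" by (rule Tne)
    show "0 \<le> \<mu>" "\<mu> \<le> 1" by (rule mu(1), rule mu(2))
    show "0 \<le> eps" using mu by (simp add: eps_def)
    show "disjoint_family_on (\<lambda>d. {Inr d, (Inl \<circ> a) d, (Inl \<circ> b) d}) T"
      unfolding disjoint_family_on_def
    proof (intro ballI impI)
      fix d d' assume d: "d \<in> T" and d': "d' \<in> T" and ne: "d \<noteq> d'"
      have "a d \<noteq> a d'" using ia d d' ne by (meson inj_onD)
      moreover have "b d \<noteq> b d'" using ib d d' ne by (meson inj_onD)
      moreover have "a d \<noteq> b d'" using dab d d' by blast
      moreover have "b d \<noteq> a d'" using dab d d' by blast
      ultimately show "{Inr d, (Inl \<circ> a) d, (Inl \<circ> b) d} \<inter> {Inr d', (Inl \<circ> a) d', (Inl \<circ> b) d'} = {}"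
        using ne by auto
    qed
    fix d assume d: "d \<in> T"
    have "a d \<in> verts n" "b d \<in> verts n" using ab d by (auto simp: Kedges_iff)
    thus "Inr d \<in> I \<and> (Inl \<circ> a) d \<in> I \<and> (Inl \<circ> b) d \<in> I"
      using d T(1) by (auto simp: I_def)
    show "Inr d \<noteq> (Inl \<circ> a) d \<and> Inr d \<noteq> (Inl \<circ> b) d \<and> (Inl \<circ> a) d \<noteq> (Inl \<circ> b) d"
      using ab d by auto
  qed
  also have "-2 * eps^2 / card T = - (real (card T) * \<mu>^6 / 2)"
    using Tne fT by (simp add: eps_def power2_eq_square field_simps)
  also have "exp \<dots> \<le> exp (- (\<mu>^6 * n / 6))"
  proof -
    have "\<mu>^6 * n \<le> \<mu>^6 * (3 * real (card T))" by (rule mult_left_mono[OF cT]) (simp add: mu)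
    thus ?thesis by (simp add: algebra_simps)
  qed
  finally show ?thesis unfolding P E_def .
qed



lemma card_edges_at:
  assumes tf: "two_factorization n col" and c: "c \<in> colours n col"
  shows "card {e\<in>Kedges n. w \<in> e \<and> col e = c} \<le> 2"
proof (cases "w \<in> verts n")
  case True
  thus ?thesis using tf c unfolding two_factorization_def by auto
next
  case False
  have "w \<in> verts n" if "e \<in> Kedges n" "w \<in> e" for e using that Kedges_sub by blast
  hence e: "{e\<in>Kedges n. w \<in> e \<and> col e = c} = {}" using False by auto
  show ?thesis unfolding e by simp
qed

lemma edge_avoid:
  assumes tf: "two_factorization n col" and c: "c \<in> colours n col"
    and rep: "replete n col l X Z" and W: "finite W" and big: "l > 2 * real (card W)"
  shows "\<exists>u v. {u,v} \<in> Kedges n \<and> col {u,v} = c \<and> u \<in> X \<and> v \<in> Z \<and> u \<notin> W \<and> v \<notin> W"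
proof -
  define E where "E = {e \<in> Kedges n. col e = c \<and> (\<exists>w\<in>X. \<exists>y\<in>Z. e = {w, y})}"
  define B where "B = (\<Union>w\<in>W. {e\<in>Kedges n. w \<in> e \<and> col e = c})"
  have cE: "real (card E) \<ge> l" using rep c unfolding replete_def E_def by auto
  have "card B \<le> (\<Sum>w\<in>W. card {e\<in>Kedges n. w \<in> e \<and> col e = c})"
    unfolding B_def by (rule card_UN_le[OF W])
  also have "\<dots> \<le> (\<Sum>w\<in>W. 2)" by (rule sum_mono) (rule card_edges_at[OF tf c])
  finally have cB: "card B \<le> 2 * card W" by simp
  have "\<not> E \<subseteq> B"
  proof
    assume "E \<subseteq> B"
    hence "card E \<le> card B" by (intro card_mono) (auto simp: B_def intro: finite_subset[OF _ finite_Kedges])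
    with cE cB big show False by linarith
  qed
  then obtain e where e: "e \<in> E" "e \<notin> B" by auto
  then obtain u v where uv: "u \<in> X" "v \<in> Z" "e = {u,v}" by (auto simp: E_def)
  have "u \<notin> W" "v \<notin> W" using e uv by (auto simp: B_def E_def)
  thus ?thesis using e uv by (intro exI[of _ u] exI[of _ v]) (auto simp: E_def)
qed

lemma col_avoid:
  assumes good: "real (card (gc n col V0 D0 x x')) \<ge> t"
    and W: "finite W" and F: "finite F" and big: "t > real (card F) + 2 * real (card W)"
  shows "\<exists>d a b. d \<in> D0 \<and> d \<notin> F \<and> a \<in> V0 \<and> b \<in> V0 \<and> a \<noteq> b \<and> {x,a} \<in> Kedges n \<and> {x',b} \<in> Kedges n
     \<and> col {x,a} = d \<and> col {x',b} = d \<and> a \<notin> W \<and> b \<notin> W"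
proof -
  define Bad where "Bad = F \<union> (\<lambda>w. col {x,w}) ` W \<union> (\<lambda>w. col {x',w}) ` W"
  have "card Bad \<le> card F + card ((\<lambda>w. col {x,w}) ` W) + card ((\<lambda>w. col {x',w}) ` W)"
    unfolding Bad_def by (meson card_Un_le le_trans add_le_mono order_refl)
  also have "\<dots> \<le> card F + card W + card W"
    by (intro add_mono card_image_le W order_refl)
  finally have cB: "card Bad \<le> card F + 2 * card W" by simp
  have "\<not> gc n col V0 D0 x x' \<subseteq> Bad"
  proof
    assume "gc n col V0 D0 x x' \<subseteq> Bad"
    hence "card (gc n col V0 D0 x x') \<le> card Bad" by (intro card_mono) (auto simp: Bad_def W F)
    with cB good big show False by linarith
  qed
  then obtain d where d: "d \<in> gc n col V0 D0 x x'" "d \<notin> Bad" by auto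
  then obtain a b where ab: "d \<in> D0" "a \<in> V0" "b \<in> V0" "a \<noteq> b" "{x,a} \<in> Kedges n" "{x',b} \<in> Kedges n"
    "col {x,a} = d" "col {x',b} = d" by (auto simp: gc_def)
  have "a \<notin> W"
  proof
    assume "a \<in> W" hence "col {x,a} \<in> Bad" unfolding Bad_def by blast
    with d(2) ab show False by simp
  qed
  moreover have "b \<notin> W"
  proof
    assume "b \<in> W" hence "col {x',b} \<in> Bad" unfolding Bad_def by blast
    with d(2) ab show False by simp
  qed
  moreover have "d \<notin> F" using d(2) by (auto simp: Bad_def)
  ultimately show ?thesis using ab by blast
qed

lemma bad_bound:
  fixes col :: "nat set \<Rightarrow> 'c"
  assumes tf: "two_factorization n col" and n: "n \<ge> 1" and mu: "0 \<le> \<mu>" "\<mu> \<le> 1"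
  shows "measure_pmf.prob (pair_pmf (random_subset \<mu> (verts n)) (random_subset \<mu> (colours n col)))
     {(V0, D0). \<exists>x\<in>verts n. \<exists>x'\<in>verts n. real (card (gc n col V0 D0 x x')) < \<mu>^3 * n / 6}
     \<le> real ((2*n+1)^2) * exp (- (\<mu>^6 * n / 6))"
proof -
  let ?P = "pair_pmf (random_subset \<mu> (verts n)) (random_subset \<mu> (colours n col))"
  define A where "A = (\<lambda>p. {(V0, D0). real (card (gc n col V0 D0 (fst p) (snd p))) < \<mu>^3 * n / 6})"
  have eq: "{(V0, D0). \<exists>x\<in>verts n. \<exists>x'\<in>verts n. real (card (gc n col V0 D0 x x')) < \<mu>^3 * n / 6}
     = (\<Union>p\<in>verts n \<times> verts n. A p)" unfolding A_def by (auto; blast)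
  have "measure_pmf.prob ?P (\<Union>p\<in>verts n \<times> verts n. A p) \<le> (\<Sum>p\<in>verts n \<times> verts n. measure_pmf.prob ?P (A p))"
    by (rule measure_pmf.finite_measure_subadditive_finite) auto
  also have "\<dots> \<le> (\<Sum>p\<in>verts n \<times> verts n. exp (- (\<mu>^6 * n / 6)))"
  proof (rule sum_mono)
    fix p assume p: "p \<in> verts n \<times> verts n"
    show "measure_pmf.prob ?P (A p) \<le> exp (- (\<mu>^6 * n / 6))"
      unfolding A_def by (rule pair_bound[OF tf _ _ n mu]) (use p in auto)
  qed
  also have "\<dots> = real ((2*n+1)^2) * exp (- (\<mu>^6 * n / 6))"
    by (simp add: verts_def card_cartesian_product power2_eq_square)
  finally show ?thesis unfolding eq .
qed



lemma step1:
  fixes cs :: "'c list"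
  assumes tf: "two_factorization n col" and cs: "set cs \<subseteq> colours n col"
    and rep: "replete n col l X Z" and fV: "finite Vbar"
    and big: "l > 2 * (real (card Vbar) + 2 * real (length cs))"
  shows "\<exists>x y. (\<forall>i<length cs. {x i, y i} \<in> Kedges n \<and> col {x i, y i} = cs ! i \<and> x i \<in> X \<and> x i \<notin> Vbar
      \<and> y i \<in> Z \<and> y i \<notin> Vbar) \<and> inj_on x {..<length cs} \<and> inj_on y {..<length cs}"
proof -
  have "\<forall>m\<le>length cs. \<exists>x y. (\<forall>i<m. {x i, y i} \<in> Kedges n \<and> col {x i, y i} = cs ! i \<and> x i \<in> X \<and> x i \<notin> Vbar
      \<and> y i \<in> Z \<and> y i \<notin> Vbar) \<and> inj_on x {..<m} \<and> inj_on y {..<m}"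
  proof (intro allI impI)
    fix m assume "m \<le> length cs"
    thus "\<exists>x y. (\<forall>i<m. {x i, y i} \<in> Kedges n \<and> col {x i, y i} = cs ! i \<and> x i \<in> X \<and> x i \<notin> Vbar
      \<and> y i \<in> Z \<and> y i \<notin> Vbar) \<and> inj_on x {..<m} \<and> inj_on y {..<m}"
    proof (induction m)
      case 0 show ?case by auto
    next
      case (Suc m)
      then obtain x y where xy: "\<forall>i<m. {x i, y i} \<in> Kedges n \<and> col {x i, y i} = cs ! i \<and> x i \<in> X \<and> x i \<notin> Vbar
          \<and> y i \<in> Z \<and> y i \<notin> Vbar" and ix: "inj_on x {..<m}" and iy: "inj_on y {..<m}" by auto
      define W where "W = Vbar \<union> x ` {..<m} \<union> y ` {..<m}"
      have fW: "finite W" using fV by (simp add: W_def)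
      have "card W \<le> card Vbar + card (x ` {..<m}) + card (y ` {..<m})"
        unfolding W_def by (meson card_Un_le le_trans add_le_mono order_refl)
      also have "\<dots> \<le> card Vbar + m + m" using card_image_le[of "{..<m}" x] card_image_le[of "{..<m}" y] by simp
      finally have cW: "real (card W) \<le> real (card Vbar) + 2 * real (length cs)" using Suc.prems by simp
      have cm: "cs ! m \<in> colours n col" using cs Suc.prems by auto
      obtain u v where uv: "{u,v} \<in> Kedges n" "col {u,v} = cs ! m" "u \<in> X" "v \<in> Z" "u \<notin> W" "v \<notin> W"
        using edge_avoid[OF tf cm rep fW] big cW by auto
      show ?case
        apply (rule exI[of _ "x(m:=u)"], rule exI[of _ "y(m:=v)"])
        apply (intro conjI)
        subgoal using xy uv by (auto simp: W_def less_Suc_eq)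
        subgoal unfolding lessThan_Suc using ix uv(5) by (auto simp: W_def inj_on_def)
        subgoal unfolding lessThan_Suc using iy uv(6) by (auto simp: W_def inj_on_def)
        done
    qed
  qed
  thus ?thesis by blast
qed

lemma step2:
  assumes xv: "\<forall>i<K. x i \<in> verts n \<and> x (Suc i) \<in> verts n"
    and good: "\<forall>u\<in>verts n. \<forall>u'\<in>verts n. real (card (gc n col V0 D0 u u')) \<ge> t"
    and fW: "finite W0" and fF: "finite F0"
    and big: "t > real (card F0) + real K + 2 * (real (card W0) + 2 * real K)"
  shows "\<exists>d a b. (\<forall>i<K. d i \<in> D0 \<and> d i \<notin> F0 \<and> a i \<in> V0 \<and> b i \<in> V0 \<and> a i \<noteq> b i
      \<and> {x i, a i} \<in> Kedges n \<and> {x (Suc i), b i} \<in> Kedges n \<and> col {x i, a i} = d i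
      \<and> col {x (Suc i), b i} = d i \<and> a i \<notin> W0 \<and> b i \<notin> W0)
      \<and> inj_on d {..<K} \<and> inj_on a {..<K} \<and> inj_on b {..<K} \<and> a ` {..<K} \<inter> b ` {..<K} = {}"
proof -
  have "\<forall>m\<le>K. \<exists>d a b. (\<forall>i<m. d i \<in> D0 \<and> d i \<notin> F0 \<and> a i \<in> V0 \<and> b i \<in> V0 \<and> a i \<noteq> b i
      \<and> {x i, a i} \<in> Kedges n \<and> {x (Suc i), b i} \<in> Kedges n \<and> col {x i, a i} = d i
      \<and> col {x (Suc i), b i} = d i \<and> a i \<notin> W0 \<and> b i \<notin> W0)
      \<and> inj_on d {..<m} \<and> inj_on a {..<m} \<and> inj_on b {..<m} \<and> a ` {..<m} \<inter> b ` {..<m} = {}"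
  proof (intro allI impI)
    fix m assume "m \<le> K"
    thus "\<exists>d a b. (\<forall>i<m. d i \<in> D0 \<and> d i \<notin> F0 \<and> a i \<in> V0 \<and> b i \<in> V0 \<and> a i \<noteq> b i
      \<and> {x i, a i} \<in> Kedges n \<and> {x (Suc i), b i} \<in> Kedges n \<and> col {x i, a i} = d i
      \<and> col {x (Suc i), b i} = d i \<and> a i \<notin> W0 \<and> b i \<notin> W0)
      \<and> inj_on d {..<m} \<and> inj_on a {..<m} \<and> inj_on b {..<m} \<and> a ` {..<m} \<inter> b ` {..<m} = {}"
    proof (induction m)
      case 0 show ?case by auto
    next
      case (Suc m)
      then obtain d a b where P: "\<forall>i<m. d i \<in> D0 \<and> d i \<notin> F0 \<and> a i \<in> V0 \<and> b i \<in> V0 \<and> a i \<noteq> b i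
        \<and> {x i, a i} \<in> Kedges n \<and> {x (Suc i), b i} \<in> Kedges n \<and> col {x i, a i} = d i
        \<and> col {x (Suc i), b i} = d i \<and> a i \<notin> W0 \<and> b i \<notin> W0"
        and id: "inj_on d {..<m}" and ia: "inj_on a {..<m}" and ib: "inj_on b {..<m}"
        and dab: "a ` {..<m} \<inter> b ` {..<m} = {}" by auto
      define W where "W = W0 \<union> a ` {..<m} \<union> b ` {..<m}"
      define F where "F = F0 \<union> d ` {..<m}"
      have fW': "finite W" using fW by (simp add: W_def)
      have fF': "finite F" using fF by (simp add: F_def)
      have "card W \<le> card W0 + card (a ` {..<m}) + card (b ` {..<m})"
        unfolding W_def by (meson card_Un_le le_trans add_le_mono order_refl)
      also have "\<dots> \<le> card W0 + m + m" using card_image_le[of "{..<m}" a] card_image_le[of "{..<m}" b] by simp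
      finally have cW: "real (card W) \<le> real (card W0) + 2 * real K" using Suc.prems by simp
      have "card F \<le> card F0 + card (d ` {..<m})"
        unfolding F_def by (rule card_Un_le)
      also have "\<dots> \<le> card F0 + m" using card_image_le[of "{..<m}" d] by simp
      finally have cF: "real (card F) \<le> real (card F0) + real K" using Suc.prems by simp
      have xm: "x m \<in> verts n" "x (Suc m) \<in> verts n" using xv Suc.prems by auto
      have g: "real (card (gc n col V0 D0 (x m) (x (Suc m)))) \<ge> t" using good xm by auto
      obtain dd aa bb where new: "dd \<in> D0" "dd \<notin> F" "aa \<in> V0" "bb \<in> V0" "aa \<noteq> bb"
        "{x m, aa} \<in> Kedges n" "{x (Suc m), bb} \<in> Kedges n" "col {x m, aa} = dd" "col {x (Suc m), bb} = dd"
        "aa \<notin> W" "bb \<notin> W"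
        using col_avoid[OF g fW' fF'] big cW cF by auto
      show ?case
        apply (rule exI[of _ "d(m:=dd)"], rule exI[of _ "a(m:=aa)"], rule exI[of _ "b(m:=bb)"])
        apply (intro conjI)
        subgoal using P new by (auto simp: W_def F_def less_Suc_eq)
        subgoal unfolding lessThan_Suc using id new(2) by (auto simp: F_def inj_on_def)
        subgoal unfolding lessThan_Suc using ia new(10) by (auto simp: W_def inj_on_def)
        subgoal unfolding lessThan_Suc using ib new(11) by (auto simp: W_def inj_on_def)
        subgoal unfolding lessThan_Suc using dab new(5,10,11) by (auto simp: W_def)
        done
    qed
  qed
  thus ?thesis by blast
qed

lemma PM:
  assumes fI: "finite I" and ix: "inj_on xs I" and iv: "inj_on vv I" and dj: "xs ` I \<inter> vv ` I = {}"
    and e: "\<forall>i\<in>I. {xs i, vv i} \<in> Kedges n \<and> col {xs i, vv i} = cc i"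
    and ic: "inj_on cc I" and cD: "cc ` I \<subseteq> D" and X': "xs ` I = X'" and V': "vv ` I \<subseteq> V' - X'"
  shows "perfect_rainbow_matching n col D X' V' ((\<lambda>i. {xs i, vv i}) ` I)"
  unfolding perfect_rainbow_matching_def
proof (intro conjI ballI impI)
  show "(\<lambda>i. {xs i, vv i}) ` I \<subseteq> Kedges n" using e by auto
next
  fix e1 e2 assume e1: "e1 \<in> (\<lambda>i. {xs i, vv i}) ` I" and e2: "e2 \<in> (\<lambda>i. {xs i, vv i}) ` I" and ne: "e1 \<noteq> e2"
  then obtain i j where i: "i \<in> I" "e1 = {xs i, vv i}" and j: "j \<in> I" "e2 = {xs j, vv j}" by auto
  with ne have ij: "i \<noteq> j" by auto
  have "xs i \<noteq> xs j" using ix i j ij by (meson inj_onD)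
  moreover have "vv i \<noteq> vv j" using iv i j ij by (meson inj_onD)
  moreover have "xs i \<noteq> vv j" "vv i \<noteq> xs j" using dj i j by auto
  ultimately show "e1 \<inter> e2 = {}" using i j by auto
next
  fix x assume "x \<in> X'"
  then obtain i where "i \<in> I" "x = xs i" using X' by auto
  thus "\<exists>e\<in>(\<lambda>i. {xs i, vv i}) ` I. x \<in> e" by auto
next
  fix e1 assume "e1 \<in> (\<lambda>i. {xs i, vv i}) ` I"
  then obtain i where i: "i \<in> I" "e1 = {xs i, vv i}" by auto
  thus "\<exists>x\<in>X'. \<exists>v\<in>V' - X'. e1 = {x, v}" using X' V' by auto
next
  show "inj_on col ((\<lambda>i. {xs i, vv i}) ` I)"
  proof (rule inj_onI)
    fix e1 e2 assume e1: "e1 \<in> (\<lambda>i. {xs i, vv i}) ` I" and e2: "e2 \<in> (\<lambda>i. {xs i, vv i}) ` I" and c: "col e1 = col e2"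
    then obtain i j where i: "i \<in> I" "e1 = {xs i, vv i}" and j: "j \<in> I" "e2 = {xs j, vv j}" by auto
    with c e have "cc i = cc j" by auto
    with ic i j have "i = j" by (meson inj_onD)
    with i j show "e1 = e2" by simp
  qed
next
  show "col ` (\<lambda>i. {xs i, vv i}) ` I \<subseteq> D" using e cD by auto
qed



lemma det:
  fixes col :: "nat set \<Rightarrow> 'c" and \<beta> \<xi> t :: real
  assumes tf: "two_factorization n col"
    and good: "\<forall>u\<in>verts n. \<forall>u'\<in>verts n. real (card (gc n col V0 D0 u u')) \<ge> t"
    and h1: "\<xi> * n > 2 * (\<beta> * n) + 400"
    and h2: "t > 3 * (\<beta> * n) + 1000"
  shows "lemma4p1_property n col \<beta> \<xi> V0 D0"
  unfolding lemma4p1_property_def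
proof (intro allI impI)
  fix C Cbar X Vbar Z
  assume C: "C \<subseteq> colours n col" and Cbar: "Cbar \<subseteq> colours n col" and X: "X \<subseteq> verts n"
    and Vbar: "Vbar \<subseteq> verts n" and Z: "Z \<subseteq> verts n" and cCbar: "real (card Cbar) \<le> \<beta> * n"
    and cVbar: "real (card Vbar) \<le> \<beta> * n" and cC: "card C \<le> 100" and XZ: "X \<inter> Z = {}"
    and rep: "replete n col (\<xi> * n) X Z"
  have fC: "finite C" by (rule finite_subset[OF C finite_colours])
  have fCbar: "finite Cbar" by (rule finite_subset[OF Cbar finite_colours])
  have fVbar: "finite Vbar" by (rule finite_subset[OF Vbar finite_verts])
  obtain cs where cs: "set cs = C" "distinct cs" using finite_distinct_list[OF fC] by blast
  define k where "k = length cs"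
  have kC: "k = card C" using distinct_card[OF cs(2)] cs(1) by (simp add: k_def)
  have k100: "k \<le> 100" using kC cC by simp
  have big1: "\<xi> * n > 2 * (real (card Vbar) + 2 * real (length cs))"
  proof -
    have "real (length cs) \<le> 100" using k100 by (simp add: k_def)
    thus ?thesis using h1 cVbar by (smt (verit))
  qed
  obtain x y where xy: "\<forall>i<k. {x i, y i} \<in> Kedges n \<and> col {x i, y i} = cs ! i \<and> x i \<in> X \<and> x i \<notin> Vbar
      \<and> y i \<in> Z \<and> y i \<notin> Vbar" and ix: "inj_on x {..<k}" and iy: "inj_on y {..<k}"
    using step1[OF tf _ rep fVbar big1] cs C unfolding k_def by auto
  define W0 where "W0 = Vbar \<union> x ` {..<k} \<union> y ` {..<k}"
  define F0 where "F0 = Cbar \<union> C"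
  define K where "K = k - 1"
  have fW0: "finite W0" using fVbar by (simp add: W0_def)
  have fF0: "finite F0" using fCbar fC by (simp add: F0_def)
  have xv: "\<forall>i<K. x i \<in> verts n \<and> x (Suc i) \<in> verts n" using xy X unfolding K_def by auto
  have "card W0 \<le> card Vbar + card (x ` {..<k}) + card (y ` {..<k})"
    unfolding W0_def by (meson card_Un_le le_trans add_le_mono order_refl)
  also have "\<dots> \<le> card Vbar + k + k" using card_image_le[of "{..<k}" x] card_image_le[of "{..<k}" y] by simp
  finally have "card W0 \<le> card Vbar + k + k" .
  hence "real (card W0) \<le> real (card Vbar) + 2 * real k" by simp
  hence cW0: "real (card W0) \<le> \<beta> * n + 200" using cVbar k100 by linarith
  have "card F0 \<le> card Cbar + card C" unfolding F0_def by (rule card_Un_le)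
  hence "real (card F0) \<le> real (card Cbar) + real (card C)" by simp
  hence cF0: "real (card F0) \<le> \<beta> * n + 100" using cCbar cC by linarith
  have big2: "t > real (card F0) + real K + 2 * (real (card W0) + 2 * real K)"
  proof -
    have "real K \<le> 100" using k100 by (simp add: K_def)
    thus ?thesis using h2 cW0 cF0 by (smt (verit))
  qed
  obtain d a b where dab: "\<forall>i<K. d i \<in> D0 \<and> d i \<notin> F0 \<and> a i \<in> V0 \<and> b i \<in> V0 \<and> a i \<noteq> b i
      \<and> {x i, a i} \<in> Kedges n \<and> {x (Suc i), b i} \<in> Kedges n \<and> col {x i, a i} = d i
      \<and> col {x (Suc i), b i} = d i \<and> a i \<notin> W0 \<and> b i \<notin> W0"
    and id: "inj_on d {..<K}" and ia: "inj_on a {..<K}" and ib: "inj_on b {..<K}"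
    and ab: "a ` {..<K} \<inter> b ` {..<K} = {}"
    using step2[OF xv good fW0 fF0 big2] by blast
  define X' where "X' = x ` {..<k}"
  define C' where "C' = d ` {..<K}"
  define V' where "V' = y ` {..<k} \<union> a ` {..<K} \<union> b ` {..<K}"
  have g0: "X' \<subseteq> X - Vbar" using xy by (auto simp: X'_def)
  have g1: "C' \<subseteq> D0 - Cbar" using dab by (auto simp: C'_def F0_def)
  have g2: "V' \<subseteq> (V0 \<union> Z) - Vbar" using xy dab by (auto simp: V'_def W0_def)
  have g3: "card X' = card C" using ix kC by (simp add: X'_def card_image)
  have g4: "card C' = card C - 1" using id kC by (simp add: C'_def card_image K_def)
    have "card V' \<le> card (y ` {..<k}) + card (a ` {..<K}) + card (b ` {..<K})"
      unfolding V'_def by (meson card_Un_le le_trans add_le_mono order_refl)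
    also have "\<dots> \<le> k + K + K" using card_image_le[of "{..<k}" y] card_image_le[of "{..<K}" a]
        card_image_le[of "{..<K}" b] by simp
    finally have g5: "card V' \<le> 3 * card C" using kC by (simp add: K_def)
  have g6: "\<forall>c\<in>C. \<exists>M. perfect_rainbow_matching n col (C' \<union> {c}) X' V' M"
  proof
    fix c assume c: "c \<in> C"
    then obtain j where j: "j < k" "cs ! j = c" using cs(1) by (auto simp: k_def in_set_conv_nth)
    define vv where "vv = (\<lambda>i. if i < j then a i else if i = j then y j else b (i - 1))"
    define cc where "cc = (\<lambda>i. if i < j then d i else if i = j then c else d (i - 1))"
    have yW: "y j \<in> W0" using j by (auto simp: W0_def)
    have xW: "\<And>i. i < k \<Longrightarrow> x i \<in> W0" by (auto simp: W0_def)
    have aW: "\<And>i. i < K \<Longrightarrow> a i \<notin> W0" and bW: "\<And>i. i < K \<Longrightarrow> b i \<notin> W0" using dab by auto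
    have dC: "\<And>i. i < K \<Longrightarrow> d i \<notin> C" using dab by (auto simp: F0_def)
    have jK: "\<And>i. i < j \<Longrightarrow> i < K" using j by (auto simp: K_def)
    have jK2: "\<And>i. j < i \<Longrightarrow> i < k \<Longrightarrow> i - 1 < K" by (auto simp: K_def)
    have ivv: "inj_on vv {..<k}"
    proof (rule inj_onI)
      fix i1 i2 assume i1: "i1 \<in> {..<k}" and i2: "i2 \<in> {..<k}" and eq: "vv i1 = vv i2"
      show "i1 = i2"
      proof (cases "i1 < j")
        case True
        note t1 = True
        show ?thesis
        proof (cases "i2 < j")
          case True thus ?thesis using t1 eq ia jK by (auto simp: vv_def inj_on_def)
        next
          case False
          show ?thesis
          proof (cases "i2 = j")
            case True thus ?thesis using t1 eq aW[OF jK[OF t1]] yW by (auto simp: vv_def)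
          next
            case False
            hence "j < i2" using \<open>\<not> i2 < j\<close> by auto
            hence "b (i2 - 1) \<in> b ` {..<K}" using jK2 i2 by auto
            moreover have "a i1 \<in> a ` {..<K}" using jK t1 by auto
            ultimately show ?thesis using t1 False \<open>\<not> i2 < j\<close> eq ab by (auto simp: vv_def)
          qed
        qed
      next
        case False
        note f1 = False
        show ?thesis
        proof (cases "i1 = j")
          case True
          show ?thesis
          proof (cases "i2 < j")
            case True thus ?thesis using \<open>i1 = j\<close> eq aW[OF jK[OF True]] yW by (auto simp: vv_def)
          next
            case False
            show ?thesis
            proof (cases "i2 = j")
              case True thus ?thesis using \<open>i1 = j\<close> by simp
            next
              case False
              hence "j < i2" using \<open>\<not> i2 < j\<close> by auto
              hence "b (i2 - 1) \<notin> W0" using bW jK2 i2 by auto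
              thus ?thesis using \<open>i1 = j\<close> False \<open>\<not> i2 < j\<close> eq yW by (auto simp: vv_def)
            qed
          qed
        next
          case False
          hence ji1: "j < i1" using f1 by auto
          show ?thesis
          proof (cases "i2 < j")
            case True
            hence "b (i1 - 1) \<in> b ` {..<K}" using jK2 i1 ji1 by auto
            moreover have "a i2 \<in> a ` {..<K}" using jK True by auto
            ultimately show ?thesis using True ji1 eq ab by (auto simp: vv_def)
          next
            case False
            show ?thesis
            proof (cases "i2 = j")
              case True
              have "b (i1 - 1) \<notin> W0" using bW jK2 i1 ji1 by auto
              thus ?thesis using True ji1 eq yW by (auto simp: vv_def)
            next
              case False
              hence ji2: "j < i2" using \<open>\<not> i2 < j\<close> by auto
              have "b (i1 - 1) = b (i2 - 1)" using eq ji1 ji2 by (auto simp: vv_def)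
              hence "i1 - 1 = i2 - 1" using ib jK2 i1 i2 ji1 ji2 by (auto simp: inj_on_def)
              thus ?thesis using ji1 ji2 by auto
            qed
          qed
        qed
      qed
    qed
    have icc: "inj_on cc {..<k}"
    proof (rule inj_onI)
      fix i1 i2 assume i1: "i1 \<in> {..<k}" and i2: "i2 \<in> {..<k}" and eq: "cc i1 = cc i2"
      have m1: "i1 \<noteq> j \<Longrightarrow> cc i1 = d (if i1 < j then i1 else i1 - 1) \<and> (if i1 < j then i1 else i1 - 1) < K"
        using jK jK2 i1 by (auto simp: cc_def)
      have m2: "i2 \<noteq> j \<Longrightarrow> cc i2 = d (if i2 < j then i2 else i2 - 1) \<and> (if i2 < j then i2 else i2 - 1) < K"
        using jK jK2 i2 by (auto simp: cc_def)
      show "i1 = i2"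
      proof (cases "i1 = j \<or> i2 = j")
        case True
        show ?thesis
        proof (rule ccontr)
          assume ne: "i1 \<noteq> i2"
          show False
          proof (cases "i1 = j")
            case True
            hence "i2 \<noteq> j" using ne by auto
            hence "c = d (if i2 < j then i2 else i2 - 1)" "(if i2 < j then i2 else i2 - 1) < K"
              using m2 eq True by (auto simp: cc_def)
            thus False using dC c by metis
          next
            case False
            hence "i2 = j" using \<open>i1 = j \<or> i2 = j\<close> by auto
            hence "c = d (if i1 < j then i1 else i1 - 1)" "(if i1 < j then i1 else i1 - 1) < K"
              using m1 eq False by (auto simp: cc_def)
            thus False using dC c by metis
          qed
        qed
      next
        case False
        hence "d (if i1 < j then i1 else i1 - 1) = d (if i2 < j then i2 else i2 - 1)" using m1 m2 eq by auto
        hence "(if i1 < j then i1 else i1 - 1) = (if i2 < j then i2 else i2 - 1)"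
          using id m1 m2 False by (auto simp: inj_on_def)
        thus ?thesis using False by (auto split: if_splits)
      qed
    qed
    have edges: "\<forall>i\<in>{..<k}. {x i, vv i} \<in> Kedges n \<and> col {x i, vv i} = cc i"
    proof
      fix i assume i: "i \<in> {..<k}"
      consider "i < j" | "i = j" | "j < i" by linarith
      thus "{x i, vv i} \<in> Kedges n \<and> col {x i, vv i} = cc i"
      proof cases
        case 1 thus ?thesis using dab jK by (auto simp: vv_def cc_def)
      next
        case 2 thus ?thesis using xy j by (auto simp: vv_def cc_def)
      next
        case 3
        hence "i - 1 < K" "Suc (i - 1) = i" using jK2 i by auto
        thus ?thesis using dab 3 by (auto simp: vv_def cc_def)
      qed
    qed
    have dj: "x ` {..<k} \<inter> vv ` {..<k} = {}"
    proof -
      have "vv i \<noteq> x i'" if "i < k" "i' < k" for i i'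
      proof -
        consider "i < j" | "i = j" | "j < i" by linarith
        thus ?thesis
        proof cases
          case 1 thus ?thesis using aW[OF jK[OF 1]] xW[OF that(2)] by (auto simp: vv_def)
        next
          case 2
          have "y j \<in> Z" "x i' \<in> X" using xy j(1) that(2) by auto
          thus ?thesis using 2 XZ by (auto simp: vv_def)
        next
          case 3 thus ?thesis using bW[OF jK2[OF 3 that(1)]] xW[OF that(2)] by (auto simp: vv_def)
        qed
      qed
      note H = this
      show ?thesis
      proof (rule equals0I)
        fix z assume "z \<in> x ` {..<k} \<inter> vv ` {..<k}"
        then obtain i i' where ii: "i' < k" "z = x i'" "i < k" "z = vv i" by auto
        from H[OF ii(3,1)] ii(2,4) show False by simp
      qed
    qed
    have ccD: "cc ` {..<k} \<subseteq> C' \<union> {c}"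
      using jK jK2 by (auto simp: cc_def C'_def)
    have vvV: "vv ` {..<k} \<subseteq> V' - X'"
    proof -
      have "vv ` {..<k} \<subseteq> V'" using jK jK2 j by (auto simp: vv_def V'_def)
      thus ?thesis using dj by (auto simp: X'_def)
    qed
    show "\<exists>M. perfect_rainbow_matching n col (C' \<union> {c}) X' V' M"
      using PM[OF _ ix ivv dj edges icc ccD _ vvV] by (auto simp: X'_def)
  qed
  show "\<exists>X' C' V'. X' \<subseteq> X - Vbar \<and> C' \<subseteq> D0 - Cbar \<and> V' \<subseteq> (V0 \<union> Z) - Vbar \<and>
           card X' = card C \<and> card C' = card C - 1 \<and> card V' \<le> 3 * card C \<and>
           (\<forall>c\<in>C. \<exists>M. perfect_rainbow_matching n col (C' \<union> {c}) X' V' M)" using g0 g1 g2 g3 g4 g5 g6 by blast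
qed



lemma lim0:
  fixes c :: real assumes c: "c > 0"
  shows "((\<lambda>n::nat. real ((2*n+1)^2) * exp (- (c * real n))) \<longlongrightarrow> 0) at_top"
  using c by real_asymp

theorem lemma4p1:
  "\<exists>K::real. K > 0 \<and>
    (\<forall>\<xi> \<mu> \<beta>::real. 0 < \<xi> \<longrightarrow> 0 < \<mu> \<longrightarrow> \<mu> \<le> 1 \<longrightarrow>
       0 < \<beta> \<longrightarrow> \<beta> \<le> (min \<xi> \<mu>) ^ nat \<lceil>K\<rceil> / K \<longrightarrow>
       (\<forall>\<epsilon>>0. \<exists>n0::nat. \<forall>n\<ge>n0. \<forall>col :: nat set \<Rightarrow> nat.
          two_factorization n col \<longrightarrow>
          measure_pmf.prob
            (pair_pmf (random_subset \<mu> (verts n)) (random_subset \<mu> (colours n col)))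
            {(V0, D0). lemma4p1_property n col \<beta> \<xi> V0 D0} \<ge> 1 - \<epsilon>))"
proof (intro exI[of _ "36::real"] conjI allI impI)
  show "(36::real) > 0" by simp
  fix \<xi> \<mu> \<beta> \<epsilon> :: real
  assume \<xi>: "0 < \<xi>" and \<mu>: "0 < \<mu>" "\<mu> \<le> 1" and \<beta>: "0 < \<beta>"
    and \<beta>le: "\<beta> \<le> (min \<xi> \<mu>) ^ nat \<lceil>36::real\<rceil> / 36" and \<epsilon>: "\<epsilon> > 0"
  define m where "m = min \<xi> \<mu>"
  have m: "0 < m" "m \<le> 1" "m \<le> \<xi>" "m \<le> \<mu>" using \<xi> \<mu> by (auto simp: m_def)
  have "nat \<lceil>36::real\<rceil> = 36" by simp
  hence \<beta>m: "\<beta> \<le> m^36 / 36" using \<beta>le by (simp add: m_def)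
  have "m^36 \<le> m^3" using m by (intro power_decreasing) auto
  also have "m^3 \<le> \<mu>^3" using m by (intro power_mono) auto
  finally have \<beta>1: "\<beta> \<le> \<mu>^3 / 36" using \<beta>m by linarith
  have "m^36 \<le> m^1" using m by (intro power_decreasing) auto
  hence \<beta>2: "\<beta> \<le> \<xi> / 36" using \<beta>m m by simp
  define c where "c = \<mu>^6 / 6"
  have c: "c > 0" using \<mu> by (simp add: c_def)
  have "eventually (\<lambda>n::nat. real ((2*n+1)^2) * exp (- (c * real n)) < \<epsilon>) at_top"
    using lim0[OF c] \<epsilon> by (rule order_tendstoD)
  then obtain N1 where N1: "\<And>n. n \<ge> N1 \<Longrightarrow> real ((2*n+1)^2) * exp (- (c * real n)) < \<epsilon>"
    by (auto simp: eventually_at_top_linorder)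
  obtain N2 :: nat where N2: "800 / \<xi> + 12000 / \<mu>^3 < real N2" using reals_Archimedean2 by blast
  show "\<exists>n0::nat. \<forall>n\<ge>n0. \<forall>col :: nat set \<Rightarrow> nat.
          two_factorization n col \<longrightarrow>
          measure_pmf.prob
            (pair_pmf (random_subset \<mu> (verts n)) (random_subset \<mu> (colours n col)))
            {(V0, D0). lemma4p1_property n col \<beta> \<xi> V0 D0} \<ge> 1 - \<epsilon>"
  proof (intro exI[of _ "max (max N1 N2) 1"] allI impI)
    fix n :: nat and col :: "nat set \<Rightarrow> nat"
    assume n: "max (max N1 N2) 1 \<le> n" and tf: "two_factorization n col"
    have n1: "n \<ge> 1" and nN1: "n \<ge> N1" and nN2: "real n \<ge> real N2" using n by auto
    have pos3: "\<mu>^3 > 0" using \<mu> by simp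
    have "800 / \<xi> < real n" using N2 nN2 pos3 \<xi>
      by (smt (verit) divide_nonneg_pos)
    hence x800: "\<xi> * real n > 800" using \<xi> by (simp add: field_simps)
    have "12000 / \<mu>^3 < real n" using N2 nN2 pos3 \<xi>
      by (smt (verit) divide_nonneg_pos)
    hence m12: "\<mu>^3 * real n > 12000" using pos3 by (simp add: field_simps)
    have bn1: "\<beta> * real n \<le> \<xi> / 36 * real n" using \<beta>2 by (intro mult_right_mono) auto
    have bn2: "\<beta> * real n \<le> \<mu>^3 / 36 * real n" using \<beta>1 by (intro mult_right_mono) auto
    have h1: "\<xi> * n > 2 * (\<beta> * n) + 400" using bn1 x800 by linarith
    have h2: "\<mu>^3 * n / 6 > 3 * (\<beta> * n) + 1000" using bn2 m12 by linarith
    let ?P = "pair_pmf (random_subset \<mu> (verts n)) (random_subset \<mu> (colours n col))"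
    define G where "G = {(V0, D0). \<forall>u\<in>verts n. \<forall>u'\<in>verts n. real (card (gc n col V0 D0 u u')) \<ge> \<mu>^3 * n / 6}"
    define B where "B = {(V0, D0). \<exists>x\<in>verts n. \<exists>x'\<in>verts n. real (card (gc n col V0 D0 x x')) < \<mu>^3 * n / 6}"
    have GS: "G \<subseteq> {(V0, D0). lemma4p1_property n col \<beta> \<xi> V0 D0}"
    proof
      fix p assume "p \<in> G"
      then obtain V0 D0 where p: "p = (V0, D0)" and g: "\<forall>u\<in>verts n. \<forall>u'\<in>verts n. real (card (gc n col V0 D0 u u')) \<ge> \<mu>^3 * n / 6"
        by (auto simp: G_def)
      have "lemma4p1_property n col \<beta> \<xi> V0 D0" by (rule det[OF tf g h1 h2])
      thus "p \<in> {(V0, D0). lemma4p1_property n col \<beta> \<xi> V0 D0}" using p by simp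
    qed
    have GB: "G = UNIV - B"
    proof (rule set_eqI)
      fix p :: "nat set \<times> nat set"
      obtain V0 D0 where p: "p = (V0, D0)" by (cases p)
      show "p \<in> G \<longleftrightarrow> p \<in> UNIV - B"
        unfolding p G_def B_def by (simp only: mem_Collect_eq case_prod_conv Diff_iff UNIV_I simp_thms) (meson not_less)
    qed
    have "measure_pmf.prob ?P B \<le> real ((2*n+1)^2) * exp (- (\<mu>^6 * n / 6))"
      unfolding B_def by (rule bad_bound[OF tf n1]) (use \<mu> in auto)
    also have "\<dots> = real ((2*n+1)^2) * exp (- (c * real n))" by (simp add: c_def)
    also have "\<dots> < \<epsilon>" by (rule N1[OF nN1])
    finally have pB: "measure_pmf.prob ?P B < \<epsilon>" .
    have "measure_pmf.prob ?P G = 1 - measure_pmf.prob ?P B"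
      unfolding GB using measure_pmf.prob_compl[of B ?P] by simp
    also have "measure_pmf.prob ?P G \<le> measure_pmf.prob ?P {(V0, D0). lemma4p1_property n col \<beta> \<xi> V0 D0}"
      by (rule measure_pmf.finite_measure_mono[OF GS]) simp
    ultimately show "measure_pmf.prob ?P {(V0, D0). lemma4p1_property n col \<beta> \<xi> V0 D0} \<ge> 1 - \<epsilon>"
      using pB by linarith
  qed
qed

end
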